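(* Let $\phi$ be a formula of $\mathsf{BSML}$ extended with both $\sqcup$ and $\oslash$. If $\phi$ does not contain $\mathrm{NE}$, then $\phi$ is downward closed and has the empty state property. If $\phi$ does not contain $\sqcup$, then $\phi$ is union closed. In particular, all formulas of $\mathsf{BSML}$ and of $\mathsf{BSML}^{\oslash}$ are union closed, and all formulas of $\mathsf{ML}$ are flat.
   Context: Formulas are generated by $\phi ::= p \mid \neg\phi \mid (\phi\wedge\phi) \mid (\phi\vee\phi) \mid \Diamond\phi \mid \mathrm{NE}\mid \phi\sqcup\phi\mid\oslash\phi$; $\mathsf{BSML}$ is the fragment without $\sqcup,\oslash$, $\mathsf{BSML}^{\oslash}$ the fragment without $\sqcup$, and $\mathsf{ML}$ the $\mathrm{NE}$-free fragment of $\mathsf{BSML}$. Models $M=(W,R,V)$ are Kripke models; a state is a subset $s\subseteq W$; $R[w]=\{v:wRv\}$. Support $\models$ and anti-support $\dashv$: $s\models p$ iff $s\subseteq V(p)$; $s\dashv p$ iff $s\cap V(p)=\emptyset$; $s\models\mathrm{NE}$ iff $s\neq\emptyset$; $s\dashv\mathrm{NE}$ iff $s=\emptyset$; $s\models\neg\phi$ iff $s\dashv\phi$; $s\dashv\neg\phi$ iff $s\models\phi$; $s\models\phi\wedge\psi$ iff both; $s\dashv\phi\wedge\psi$ iff $s=t\cup u$ with $t\dashv\phi,u\dashv\psi$; $s\models\phi\vee\psi$ iff $s=t\cup u$ with $t\models\phi,u\models\psi$; $s\dashv\phi\vee\psi$ iff $s\dashv\phi$ and $s\dashv\psi$; $s\models\phi\sqcup\psi$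 iff $s\models\phi$ or $s\models\psi$; $s\dashv\phi\sqcup\psi$ iff $s\dashv\phi$ and $s\dashv\psi$; $s\models\Diamond\phi$ iff every $w\in s$ has a nonempty $t\subseteq R[w]$ with $t\models\phi$; $s\dashv\Diamond\phi$ iff $R[w]\dashv\phi$ for all $w\in s$; $s\models\oslash\phi$ iff $s\models\phi$ or $s=\emptyset$; $s\dashv\oslash\phi$ iff $s\dashv\phi$. A formula $\phi$ is downward closed if $M,s\models\phi$ and $t\subseteq s$ imply $M,t\models\phi$; union closed if $M,s\models\phi$ for all $s$ in a nonempty set $S$ of states implies $M,\bigcup S\models\phi$; has the empty state property if $M,\emptyset\models\phi$ for every $M$; flat if $M,s\models\phi$ iff $M,\{w\}\models\phi$ for all $w\in s$. *)

theory Defs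
  imports Main
begin

datatype 'p form =
    Prop 'p
  | Neg "'p form"
  | Conj "'p form" "'p form"
  | Disj "'p form" "'p form"
  | Dia "'p form"
  | NE
  | GDisj "'p form" "'p form"   (* global / inquisitive disjunction \<sqcup> *)
  | Emp "'p form"               (* \<oslash> *)

(* Kripke model: worlds are the elements of type 'w (W = UNIV) *)
record ('w, 'p) kmodel =
  Rel :: "'w \<Rightarrow> 'w \<Rightarrow> bool"
  Val :: "'p \<Rightarrow> 'w set"

definition succ :: "('w, 'p) kmodel \<Rightarrow> 'w \<Rightarrow> 'w set" where
  "succ M w = {v. Rel M w v}"

(* sem M True  phi s  :  M, s supports phi
   sem M False phi s  :  M, s anti-supports phi *)
fun sem :: "('w, 'p) kmodel \<Rightarrow> bool \<Rightarrow> 'p form \<Rightarrow> 'w set \<Rightarrow> bool" where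
  "sem M True (Prop p) s = (s \<subseteq> Val M p)"
| "sem M False (Prop p) s = (s \<inter> Val M p = {})"
| "sem M True NE s = (s \<noteq> {})"
| "sem M False NE s = (s = {})"
| "sem M True (Neg \<phi>) s = sem M False \<phi> s"
| "sem M False (Neg \<phi>) s = sem M True \<phi> s"
| "sem M True (Conj \<phi> \<psi>) s = (sem M True \<phi> s \<and> sem M True \<psi> s)"
| "sem M False (Conj \<phi> \<psi>) s = (\<exists>t u. s = t \<union> u \<and> sem M False \<phi> t \<and> sem M False \<psi> u)"
| "sem M True (Disj \<phi> \<psi>) s = (\<exists>t u. s = t \<union> u \<and> sem M True \<phi> t \<and> sem M True \<psi> u)"
| "sem M False (Disj \<phi> \<psi>) s = (sem M False \<phi> s \<and> sem M False \<psi> s)"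
| "sem M True (GDisj \<phi> \<psi>) s = (sem M True \<phi> s \<or> sem M True \<psi> s)"
| "sem M False (GDisj \<phi> \<psi>) s = (sem M False \<phi> s \<and> sem M False \<psi> s)"
| "sem M True (Dia \<phi>) s = (\<forall>w\<in>s. \<exists>t. t \<noteq> {} \<and> t \<subseteq> succ M w \<and> sem M True \<phi> t)"
| "sem M False (Dia \<phi>) s = (\<forall>w\<in>s. sem M False \<phi> (succ M w))"
| "sem M True (Emp \<phi>) s = (sem M True \<phi> s \<or> s = {})"
| "sem M False (Emp \<phi>) s = sem M False \<phi> s"

abbreviation supports :: "('w, 'p) kmodel \<Rightarrow> 'w set \<Rightarrow> 'p form \<Rightarrow> bool" where
  "supports M s \<phi> \<equiv> sem M True \<phi> s"

fun has_NE :: "'p form \<Rightarrow> bool" where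
  "has_NE (Prop p) = False"
| "has_NE NE = True"
| "has_NE (Neg \<phi>) = has_NE \<phi>"
| "has_NE (Conj \<phi> \<psi>) = (has_NE \<phi> \<or> has_NE \<psi>)"
| "has_NE (Disj \<phi> \<psi>) = (has_NE \<phi> \<or> has_NE \<psi>)"
| "has_NE (GDisj \<phi> \<psi>) = (has_NE \<phi> \<or> has_NE \<psi>)"
| "has_NE (Dia \<phi>) = has_NE \<phi>"
| "has_NE (Emp \<phi>) = has_NE \<phi>"

fun has_GDisj :: "'p form \<Rightarrow> bool" where
  "has_GDisj (Prop p) = False"
| "has_GDisj NE = False"
| "has_GDisj (Neg \<phi>) = has_GDisj \<phi>"
| "has_GDisj (Conj \<phi> \<psi>) = (has_GDisj \<phi> \<or> has_GDisj \<psi>)"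
| "has_GDisj (Disj \<phi> \<psi>) = (has_GDisj \<phi> \<or> has_GDisj \<psi>)"
| "has_GDisj (GDisj \<phi> \<psi>) = True"
| "has_GDisj (Dia \<phi>) = has_GDisj \<phi>"
| "has_GDisj (Emp \<phi>) = has_GDisj \<phi>"

fun has_Emp :: "'p form \<Rightarrow> bool" where
  "has_Emp (Prop p) = False"
| "has_Emp NE = False"
| "has_Emp (Neg \<phi>) = has_Emp \<phi>"
| "has_Emp (Conj \<phi> \<psi>) = (has_Emp \<phi> \<or> has_Emp \<psi>)"
| "has_Emp (Disj \<phi> \<psi>) = (has_Emp \<phi> \<or> has_Emp \<psi>)"
| "has_Emp (GDisj \<phi> \<psi>) = (has_Emp \<phi> \<or> has_Emp \<psi>)"
| "has_Emp (Dia \<phi>) = has_Emp \<phi>"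
| "has_Emp (Emp \<phi>) = True"

definition is_BSML :: "'p form \<Rightarrow> bool" where
  "is_BSML \<phi> = (\<not> has_GDisj \<phi> \<and> \<not> has_Emp \<phi>)"

definition is_BSML_emp :: "'p form \<Rightarrow> bool" where
  "is_BSML_emp \<phi> = (\<not> has_GDisj \<phi>)"

definition is_ML :: "'p form \<Rightarrow> bool" where
  "is_ML \<phi> = (is_BSML \<phi> \<and> \<not> has_NE \<phi>)"

definition downward_closed :: "'p form \<Rightarrow> 'w itself \<Rightarrow> bool" where
  "downward_closed \<phi> _ = (\<forall>(M :: ('w, 'p) kmodel) s t.
      supports M s \<phi> \<and> t \<subseteq> s \<longrightarrow> supports M t \<phi>)"

definition union_closed :: "'p form \<Rightarrow> 'w itself \<Rightarrow> bool" where
  "union_closed \<phi> _ = (\<forall>(M :: ('w, 'p) kmodel) (S :: 'w set set).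
      S \<noteq> {} \<and> (\<forall>s\<in>S. supports M s \<phi>) \<longrightarrow> supports M (\<Union>S) \<phi>)"

definition empty_state_property :: "'p form \<Rightarrow> 'w itself \<Rightarrow> bool" where
  "empty_state_property \<phi> _ = (\<forall>M :: ('w, 'p) kmodel. supports M {} \<phi>)"

definition flat :: "'p form \<Rightarrow> 'w itself \<Rightarrow> bool" where
  "flat \<phi> _ = (\<forall>(M :: ('w, 'p) kmodel) s.
      supports M s \<phi> \<longleftrightarrow> (\<forall>w\<in>s. supports M {w} \<phi>))"

end

theory Submission
  imports Defs
begin

lemma emp_aux: "\<not> has_NE \<phi> \<Longrightarrow> sem M b \<phi> {}"
proof (induction \<phi> arbitrary: b)
  case (Conj \<phi>1 \<phi>2)
  then show ?case using Conj.IH(1)[of False] Conj.IH(2)[of False] Conj.IH(1)[of True] Conj.IH(2)[of True] Conj.prems by (cases b) auto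
next
  case (Disj \<phi>1 \<phi>2)
  then show ?case using Disj.IH(1)[of False] Disj.IH(2)[of False] Disj.IH(1)[of True] Disj.IH(2)[of True] Disj.prems by (cases b) auto
qed (case_tac b; simp)+

lemma dc_aux:
  "\<not> has_NE \<phi> \<Longrightarrow> sem M b \<phi> s \<Longrightarrow> t \<subseteq> s \<Longrightarrow> sem M b \<phi> t"
proof (induction \<phi> arbitrary: b s t)
  case (Prop x)
  then show ?case by (cases b) auto
next
  case (Neg \<phi>)
  show ?case using Neg.prems Neg.IH[of "\<not> b" s t] by (cases b) simp_all
next
  case (Conj \<phi>1 \<phi>2)
  show ?case
  proof (cases b)
    case True
    then show ?thesis using Conj.prems Conj.IH(1)[of True s t] Conj.IH(2)[of True s t] by simp
  next
    case False
    from Conj.prems False obtain a c where ac: "s = a \<union> c" "sem M False \<phi>1 a" "sem M False \<phi>2 c" by auto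
    have F1: "sem M False \<phi>1 (t \<inter> a)" using Conj.IH(1)[of False a "t \<inter> a"] Conj.prems ac by simp
    have F2: "sem M False \<phi>2 (t \<inter> c)" using Conj.IH(2)[of False c "t \<inter> c"] Conj.prems ac by simp
    have F3: "t = (t \<inter> a) \<union> (t \<inter> c)" using Conj.prems ac by blast
        have bF: "b = False" using False by simp
    show ?thesis unfolding bF sem.simps by (rule exI, rule exI, intro conjI, rule F3, rule F1, rule F2)
  qed
next
  case (Disj \<phi>1 \<phi>2)
  show ?case
  proof (cases b)
    case False
    then show ?thesis using Disj.prems Disj.IH(1)[of False s t] Disj.IH(2)[of False s t] by simp
  next
    case True
    from Disj.prems True obtain a c where ac: "s = a \<union> c" "sem M True \<phi>1 a" "sem M True \<phi>2 c" by auto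
    have F1: "sem M True \<phi>1 (t \<inter> a)" using Disj.IH(1)[of True a "t \<inter> a"] Disj.prems ac by simp
    have F2: "sem M True \<phi>2 (t \<inter> c)" using Disj.IH(2)[of True c "t \<inter> c"] Disj.prems ac by simp
    have F3: "t = (t \<inter> a) \<union> (t \<inter> c)" using Disj.prems ac by blast
        have bT: "b = True" using True by simp
    show ?thesis unfolding bT sem.simps by (rule exI, rule exI, intro conjI, rule F3, rule F1, rule F2)
  qed
next
  case (Dia \<phi>)
  show ?case using Dia.prems by (cases b) auto
next
  case NE
  then show ?case by simp
next
  case (GDisj \<phi>1 \<phi>2)
  show ?case using GDisj.prems GDisj.IH(1)[of b s t] GDisj.IH(2)[of b s t] by (cases b) auto
next
  case (Emp \<phi>)
  show ?case using Emp.prems Emp.IH[of b s t] by (cases b) auto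
qed

lemma uc_aux:
  "\<not> has_GDisj \<phi> \<Longrightarrow> I \<noteq> {} \<Longrightarrow> (\<forall>i\<in>I. sem M b \<phi> (f i)) \<Longrightarrow> sem M b \<phi> (\<Union>i\<in>I. f i)"
proof (induction \<phi> arbitrary: b I f)
  case (Prop x)
  show ?case using Prop.prems by (cases b) auto
next
  case (Neg \<phi>)
  show ?case using Neg.prems Neg.IH[of I "\<not> b" f] by (cases b) simp_all
next
  case (Conj \<phi>1 \<phi>2)
  show ?case
  proof (cases b)
    case True
    then show ?thesis using Conj.prems Conj.IH(1)[of I True f] Conj.IH(2)[of I True f] by simp
  next
    case False
    then have "\<forall>i\<in>I. \<exists>a c. f i = a \<union> c \<and> sem M False \<phi>1 a \<and> sem M False \<phi>2 c" using Conj.prems by simp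
    then obtain a c where ac: "\<forall>i\<in>I. f i = a i \<union> c i \<and> sem M False \<phi>1 (a i) \<and> sem M False \<phi>2 (c i)"
      by metis
    have F1: "sem M False \<phi>1 (\<Union>i\<in>I. a i)" using Conj.IH(1)[of I False a] Conj.prems ac by simp
    have F2: "sem M False \<phi>2 (\<Union>i\<in>I. c i)" using Conj.IH(2)[of I False c] Conj.prems ac by simp
    have F3: "(\<Union>i\<in>I. f i) = (\<Union>i\<in>I. a i) \<union> (\<Union>i\<in>I. c i)" using ac by blast
        have bF: "b = False" using False by simp
    show ?thesis unfolding bF sem.simps by (rule exI, rule exI, intro conjI, rule F3, rule F1, rule F2)
  qed
next
  case (Disj \<phi>1 \<phi>2)
  show ?case
  proof (cases b)
    case False
    then show ?thesis using Disj.prems Disj.IH(1)[of I False f] Disj.IH(2)[of I False f] by simp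
  next
    case True
    then have "\<forall>i\<in>I. \<exists>a c. f i = a \<union> c \<and> sem M True \<phi>1 a \<and> sem M True \<phi>2 c" using Disj.prems by simp
    then obtain a c where ac: "\<forall>i\<in>I. f i = a i \<union> c i \<and> sem M True \<phi>1 (a i) \<and> sem M True \<phi>2 (c i)"
      by metis
    have F1: "sem M True \<phi>1 (\<Union>i\<in>I. a i)" using Disj.IH(1)[of I True a] Disj.prems ac by simp
    have F2: "sem M True \<phi>2 (\<Union>i\<in>I. c i)" using Disj.IH(2)[of I True c] Disj.prems ac by simp
    have F3: "(\<Union>i\<in>I. f i) = (\<Union>i\<in>I. a i) \<union> (\<Union>i\<in>I. c i)" using ac by blast
        have bT: "b = True" using True by simp
    show ?thesis unfolding bT sem.simps by (rule exI, rule exI, intro conjI, rule F3, rule F1, rule F2)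
  qed
next
  case (Dia \<phi>)
  show ?case
  proof (cases b)
    case True
    have bT: "b = True" using True by simp
    show ?thesis unfolding bT sem.simps
    proof
      fix w assume "w \<in> (\<Union>i\<in>I. f i)"
      then obtain i where "i \<in> I" "w \<in> f i" by blast
      then show "\<exists>t. t \<noteq> {} \<and> t \<subseteq> succ M w \<and> sem M True \<phi> t" using Dia.prems True by simp
    qed
  next
    case False
    have bF: "b = False" using False by simp
    show ?thesis unfolding bF sem.simps
    proof
      fix w assume "w \<in> (\<Union>i\<in>I. f i)"
      then obtain i where "i \<in> I" "w \<in> f i" by blast
      then show "sem M False \<phi> (succ M w)" using Dia.prems False by simp
    qed
  qed
next
  case NE
  show ?case using NE.prems by (cases b) auto
next
  case (GDisj \<phi>1 \<phi>2)
  show ?case using GDisj.prems by simp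
next
  case (Emp \<phi>)
  show ?case
  proof (cases b)
    case False
    then show ?thesis using Emp.prems Emp.IH[of I False f] by simp
  next
    case True
    have bT: "b = True" using True by simp
    define J where "J = {i\<in>I. sem M True \<phi> (f i)}"
    show ?thesis
    proof (cases "J = {}")
      case True
      then have "\<forall>i\<in>I. f i = {}" using Emp.prems unfolding bT J_def by auto
      then have "(\<Union>i\<in>I. f i) = {}" by blast
      then show ?thesis unfolding bT sem.simps by blast
    next
      case False
      have "\<forall>i\<in>J. sem M True \<phi> (f i)" unfolding J_def by blast
      then have "sem M True \<phi> (\<Union>i\<in>J. f i)" using Emp.IH[of J True f] Emp.prems(1) False by simp
      moreover have "(\<Union>i\<in>J. f i) = (\<Union>i\<in>I. f i)" using Emp.prems(3) unfolding bT J_def by auto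
      ultimately show ?thesis unfolding bT sem.simps by simp
    qed
  qed
qed

theorem fact2p7:
  fixes \<phi> :: "'p form"
  shows "(\<not> has_NE \<phi> \<longrightarrow>
            downward_closed \<phi> TYPE('w) \<and> empty_state_property \<phi> TYPE('w))
       \<and> (\<not> has_GDisj \<phi> \<longrightarrow> union_closed \<phi> TYPE('w))
       \<and> (is_BSML \<phi> \<longrightarrow> union_closed \<phi> TYPE('w))
       \<and> (is_BSML_emp \<phi> \<longrightarrow> union_closed \<phi> TYPE('w))
       \<and> (is_ML \<phi> \<longrightarrow> flat \<phi> TYPE('w))"
proof -
  have DC: "downward_closed \<phi> TYPE('w) \<and> empty_state_property \<phi> TYPE('w)" if "\<not> has_NE \<phi>"
  proof
    show "downward_closed \<phi> TYPE('w)" unfolding downward_closed_def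
    proof (intro allI impI)
      fix M :: "('w,'p) kmodel" and s t
      assume "supports M s \<phi> \<and> t \<subseteq> s"
      then show "supports M t \<phi>" using dc_aux[OF that, of M True s t] by simp
    qed
    show "empty_state_property \<phi> TYPE('w)" unfolding empty_state_property_def
      by (intro allI) (rule emp_aux[OF that])
  qed
  have UC: "union_closed \<phi> TYPE('w)" if "\<not> has_GDisj \<phi>"
    unfolding union_closed_def
  proof (intro allI impI)
    fix M :: "('w,'p) kmodel" and S :: "'w set set"
    assume "S \<noteq> {} \<and> (\<forall>s\<in>S. supports M s \<phi>)"
    then show "supports M (\<Union>S) \<phi>" using uc_aux[OF that, of S M True id] by simp
  qed
  have FL: "flat \<phi> TYPE('w)" if "is_ML \<phi>"
    unfolding flat_def
  proof (intro allI iffI)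
    fix M :: "('w,'p) kmodel" and s
    have n: "\<not> has_NE \<phi>" "\<not> has_GDisj \<phi>" using that unfolding is_ML_def is_BSML_def by auto
    { assume "supports M s \<phi>"
      then show "\<forall>w\<in>s. supports M {w} \<phi>" using dc_aux[OF n(1), of M True s] by simp }
    { assume A: "\<forall>w\<in>s. supports M {w} \<phi>"
      show "supports M s \<phi>"
      proof (cases "s = {}")
        case True
        then show ?thesis using emp_aux[OF n(1), of M True] by simp
      next
        case False
        then show ?thesis using uc_aux[OF n(2) False, of M True "\<lambda>w. {w}"] A by simp
      qed }
  qed
  show ?thesis using DC UC FL unfolding is_BSML_def is_BSML_emp_def by simp
qed

end
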